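(* Let $\mathcal{G}_n$ be the set of binary words $w=w_1\cdots w_{2n}$ with $n$ zeros and $n$ ones. For $w\in\mathcal{G}_n$ let $o_{00}(w)=|\{i\in[n]: w_{2i-1}w_{2i}=00\}|$, $o_0(w)=|\{i\in[n]: w_{2i-1}=0\}|$, $\#_{001}(w)$ the number of occurrences of $001$ as a consecutive subword of $w$, and $\#_{01}(w)$ the number of occurrences of $01$ as a consecutive subword of $w$. Then there is a bijection $\phi:\mathcal{G}_n\to\mathcal{G}_n$ such that for all $w\in\mathcal{G}_n$, $$o_{00}(w)=\#_{001}(\phi(w))\quad\text{and}\quad o_0(w)=\#_{01}(\phi(w)).$$
   Context: $[n]=\{1,2,\dots,n\}$. *)

theory Defs
  imports Main
begin

text \<open>Binary words are lists over {0,1} (type nat); letter w_j of the paper is w ! (j-1).\<close>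

definition G :: "nat \<Rightarrow> nat list set" where
  "G n = {w. length w = 2 * n \<and> set w \<subseteq> {0, 1} \<and>
              length (filter (\<lambda>x. x = 0) w) = n \<and> length (filter (\<lambda>x. x = 1) w) = n}"

definition o00 :: "nat \<Rightarrow> nat list \<Rightarrow> nat" where
  "o00 n w = card {i \<in> {1..n}. w ! (2*i - 2) = 0 \<and> w ! (2*i - 1) = 0}"

definition o0 :: "nat \<Rightarrow> nat list \<Rightarrow> nat" where
  "o0 n w = card {i \<in> {1..n}. w ! (2*i - 2) = 0}"

definition occ001 :: "nat list \<Rightarrow> nat" where
  "occ001 w = card {i. i + 2 < length w \<and> w ! i = 0 \<and> w ! (i+1) = 0 \<and> w ! (i+2) = 1}"

definition occ01 :: "nat list \<Rightarrow> nat" where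
  "occ01 w = card {i. i + 1 < length w \<and> w ! i = 0 \<and> w ! (i+1) = 1}"

end

theory Submission
  imports Defs
begin

abbreviation c0 :: "nat list \<Rightarrow> nat" where "c0 v \<equiv> length (filter (\<lambda>x. x = 0) v)"
abbreviation c1 :: "nat list \<Rightarrow> nat" where "c1 v \<equiv> length (filter (\<lambda>x. x = 1) v)"

fun dec :: "nat list \<Rightarrow> nat list \<Rightarrow> nat list" where
  "dec [] Y = replicate (length Y) 0"
| "dec (x # X) [] = 1 # dec X []"
| "dec (x # X) (y # Y) = (if x = 0 then 1 # dec X (y # Y)
     else if y = 0 then 0 # dec (x # X) Y else 0 # 1 # dec X Y)"

fun encX :: "bool \<Rightarrow> nat list \<Rightarrow> nat list" where
  "encX b [] = []"
| "encX b (a # v) = (if a = 1 then (if b then 1 else 0) # encX False v else encX True v)"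

fun encY :: "nat list \<Rightarrow> nat list" where
  "encY [] = []"
| "encY (a # v) = (if a = 0 then (if v \<noteq> [] \<and> hd v = 1 then 1 else 0) # encY v else encY v)"

fun c01 :: "nat list \<Rightarrow> nat" where
  "c01 [] = 0"
| "c01 (a # v) = (if a = 0 \<and> v \<noteq> [] \<and> hd v = 1 then 1 else 0) + c01 v"

fun c001 :: "nat list \<Rightarrow> nat" where
  "c001 [] = 0"
| "c001 (a # v) = (if a = 0 \<and> take 2 v = [0,1] then 1 else 0) + c001 v"

lemma dec_0[simp]: "dec (0 # X) Y = 1 # dec X Y"
  by (cases Y) auto

lemma encY_rep0: "encY (replicate r 0) = replicate r 0"
  by (induction r) (auto simp: hd_replicate)

lemma encY_rep0_1: "r > 0 \<Longrightarrow> encY (replicate r 0 @ 1 # v) = replicate (r - 1) 0 @ 1 # encY v"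
proof (induction r)
  case 0 then show ?case by simp
next
  case (Suc r) then show ?case by (cases r) auto
qed

lemma dec_rep: "dec (1 # X) (replicate m 0 @ 1 # Y) = replicate (Suc m) 0 @ 1 # dec X Y"
  by (induction m) auto

lemma dec_enc_gen: "set v \<subseteq> {0,1} \<Longrightarrow> dec (encX (r > 0) v) (encY (replicate r 0 @ v)) = replicate r 0 @ v"
proof (induction v arbitrary: r)
  case Nil then show ?case by (simp add: encY_rep0)
next
  case (Cons a v)
  show ?case
  proof (cases "a = 0")
    case True
    have e1: "replicate r 0 @ a # v = replicate (Suc r) 0 @ v" using True by (simp add: replicate_app_Cons_same)
    have e2: "encX (r > 0) (a # v) = encX (Suc r > 0) v" using True by simp
    have "dec (encX (Suc r > 0) v) (encY (replicate (Suc r) 0 @ v)) = replicate (Suc r) 0 @ v"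
      using Cons.IH[of "Suc r"] Cons.prems by (simp del: replicate_Suc)
    then show ?thesis unfolding e1 e2 .
  next
    case False
    then have a1: "a = 1" using Cons.prems by auto
    show ?thesis
    proof (cases "r = 0")
      case True
      then show ?thesis using Cons.IH[of 0] Cons.prems a1 by simp
    next
      case False
      have "dec (encX (r > 0) (a # v)) (encY (replicate r 0 @ a # v)) =
          dec (1 # encX False v) (replicate (r - 1) 0 @ 1 # encY v)"
        using False a1 encY_rep0_1[of r v] by simp
      also have "\<dots> = replicate r 0 @ 1 # dec (encX False v) (encY v)"
        using dec_rep[where m="r - 1"] False by simp
      also have "\<dots> = replicate r 0 @ a # v" using Cons.IH[of 0] Cons.prems a1 by simp
      finally show ?thesis .
    qed
  qed
qed

lemma dec_enc: "set v \<subseteq> {0,1} \<Longrightarrow> dec (encX False v) (encY v) = v"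
  using dec_enc_gen[of v 0] by simp

lemma dec_hd: "Y \<noteq> [] \<Longrightarrow> \<exists>r. dec (1 # X) Y = 0 # r"
  by (cases Y) auto

lemma encX_rep: "encX b (replicate m 0) = []"
  by (induction m arbitrary: b) auto

lemma c1_0: "set Y \<subseteq> {0,1} \<Longrightarrow> c1 Y = 0 \<Longrightarrow> Y = replicate (length Y) 0"
  by (induction Y) auto

lemma encX_dec: "set X \<subseteq> {0,1} \<Longrightarrow> set Y \<subseteq> {0,1} \<Longrightarrow> c1 X = c1 Y \<Longrightarrow>
   (b \<longrightarrow> X = [] \<or> hd X = 1) \<Longrightarrow> encX b (dec X Y) = X"
proof (induction X Y arbitrary: b rule: dec.induct)
  case (1 Y) then show ?case by (simp add: encX_rep)
next
  case (2 x X)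
  have x0: "x = 0" using 2(2,3,4) by (auto split: if_splits)
  then show ?case using 2(1)[of False] 2(2-) by (auto split: if_splits)
next
  case (3 x X y Y)
  show ?case
  proof (cases "x = 0")
    case True then show ?thesis using 3(1)[of False] 3(4-) by (auto split: if_splits)
  next
    case False
    then have x1: "x = 1" using 3(4) by auto
    show ?thesis
    proof (cases "y = 0")
      case True
      then show ?thesis using 3(2)[of True] 3(4-) x1 by simp
    next
      case False
      then have y1: "y = 1" using 3(5) by auto
      then show ?thesis using 3(3)[of False] 3(4-) x1 by simp
    qed
  qed
qed

lemma encY_dec: "set X \<subseteq> {0,1} \<Longrightarrow> set Y \<subseteq> {0,1} \<Longrightarrow> c1 X = c1 Y \<Longrightarrow>
   encY (dec X Y) = Y"
proof (induction X Y rule: dec.induct)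
  case (1 Y)
  have "Y = replicate (length Y) 0" using c1_0[of Y] 1 by simp
  then show ?case by (metis dec.simps(1) encY_rep0)
next
  case (2 x X)
  have x0: "x = 0" using 2(2,3,4) by (auto split: if_splits)
  then show ?case using 2(1) 2(2-) by (auto split: if_splits)
next
  case (3 x X y Y)
  show ?case
  proof (cases "x = 0")
    case True then show ?thesis using 3(1) 3(4-) by (auto split: if_splits)
  next
    case False
    then have x1: "x = 1" using 3(4) by auto
    show ?thesis
    proof (cases "y = 0")
      case True
      then have "Y \<noteq> []" using 3(6) x1 by auto
      then obtain r where r: "dec (1 # X) Y = 0 # r" using dec_hd by blast
      have "encY (dec (x # X) (y # Y)) = 0 # encY (dec (x # X) Y)"
        using True x1 r by simp
      then show ?thesis using 3(2) 3(4-) True x1 by simp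
    next
      case False
      then have y1: "y = 1" using 3(5) by auto
      then show ?thesis using 3(3) 3(4-) x1 by simp
    qed
  qed
qed


lemma dec_set: "set (dec X Y) \<subseteq> {0,1}"
  by (induction X Y rule: dec.induct) auto

lemma dec_c1: "c1 (dec X Y) = length X"
  by (induction X Y rule: dec.induct) auto

lemma dec_c0: "c0 (dec X Y) = length Y"
  by (induction X Y rule: dec.induct) auto

lemma encX_set: "set (encX b v) \<subseteq> {0,1}"
  by (induction b v rule: encX.induct) auto

lemma encX_len: "length (encX b v) = c1 v"
  by (induction b v rule: encX.induct) auto

lemma encY_set: "set (encY v) \<subseteq> {0,1}"
  by (induction v rule: encY.induct) auto

lemma encY_len: "length (encY v) = c0 v"
  by (induction v rule: encY.induct) auto

lemma encY_c1: "c1 (encY v) = c01 v"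
  by (induction v rule: encY.induct) auto

lemma encX_c1: "set v \<subseteq> {0,1} \<Longrightarrow> c1 (encX b v) = c01 v + (if b \<and> v \<noteq> [] \<and> hd v = 1 then 1 else 0)"
  by (induction b v rule: encX.induct) auto

lemma c001_encY: "set v \<subseteq> {0,1} \<Longrightarrow> c001 v = c01 (encY v)"
proof (induction v)
  case Nil then show ?case by simp
next
  case (Cons a v)
  show ?case
  proof (cases "a = 0")
    case False then show ?thesis using Cons by simp
  next
    case True
    show ?thesis
    proof (cases v)
      case Nil then show ?thesis using True by simp
    next
      case (Cons b u)
      then show ?thesis using True Cons.IH Cons.prems by (cases u) auto
    qed
  qed
qed

lemma card_shift:
  assumes "finite {i. Q i}" "\<And>i. P (Suc i) = Q i"
  shows "card {i. P i} = (if P 0 then 1 else 0) + card {i. Q i}"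
proof -
  have e: "{i. P i} = (if P 0 then {0} else {}) \<union> Suc ` {i. Q i}"
    using assms(2) by (auto simp: image_iff) (metis not0_implies_Suc)+
  have "card (Suc ` {i. Q i}) = card {i. Q i}" by (simp add: card_image)
  then show ?thesis unfolding e using assms(1) by auto
qed

lemma occ01_c01: "occ01 w = c01 w"
proof (induction w)
  case Nil then show ?case by (simp add: occ01_def)
next
  case (Cons a v)
  have "occ01 (a # v) = (if (0 + 1 < length (a#v) \<and> (a#v)!0 = 0 \<and> (a#v)!(0+1) = 1) then 1 else 0) + occ01 v"
    unfolding occ01_def
    by (rule card_shift[where P="\<lambda>i. i + 1 < length (a#v) \<and> (a#v)!i = 0 \<and> (a#v)!(i+1) = 1"]) (auto intro: finite_subset[of _ "{..<length v}"])
  then show ?case using Cons by (cases v) auto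
qed

lemma occ001_c001: "occ001 w = c001 w"
proof (induction w)
  case Nil then show ?case by (simp add: occ001_def)
next
  case (Cons a v)
  have "occ001 (a # v) = (if (0 + 2 < length (a#v) \<and> (a#v)!0 = 0 \<and> (a#v)!(0+1) = 0 \<and> (a#v)!(0+2) = 1) then 1 else 0) + occ001 v"
    unfolding occ001_def
    by (rule card_shift[where P="\<lambda>i. i + 2 < length (a#v) \<and> (a#v)!i = 0 \<and> (a#v)!(i+1) = 0 \<and> (a#v)!(i+2) = 1"]) (auto intro: finite_subset[of _ "{..<length v}"])
  moreover have "(0 + 2 < length (a#v) \<and> (a#v)!0 = 0 \<and> (a#v)!(0+1) = 0 \<and> (a#v)!(0+2) = 1) = (a = 0 \<and> take 2 v = [0,1])"
  proof (cases v)
    case Nil then show ?thesis by simp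
  next
    case (Cons b u) then show ?thesis by (cases u) (auto simp: numeral_2_eq_2)
  qed
  ultimately show ?case using Cons by simp
qed


fun spX :: "nat list \<Rightarrow> nat list" where
  "spX (a # b # w) = (if a = 0 then 1 else 0) # spX w"
| "spX _ = []"

fun sp2 :: "nat list \<Rightarrow> nat list" where
  "sp2 (a # b # w) = (if a = 0 then (if b = 0 then 1 else 0) # sp2 w else sp2 w)"
| "sp2 _ = []"

fun sp3 :: "nat list \<Rightarrow> nat list" where
  "sp3 (a # b # w) = (if a = 0 then sp3 w else (if b = 1 then 1 else 0) # sp3 w)"
| "sp3 _ = []"

fun mg :: "nat list \<Rightarrow> nat list \<Rightarrow> nat list \<Rightarrow> nat list" where
  "mg [] A B = []"
| "mg (x # X) A B = (if x = 1 then 0 # (if hd A = 1 then 0 else 1) # mg X (tl A) B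
      else 1 # (if hd B = 1 then 1 else 0) # mg X A (tl B))"

lemma mg_sp: "set w \<subseteq> {0,1} \<Longrightarrow> even (length w) \<Longrightarrow> mg (spX w) (sp2 w) (sp3 w) = w"
  by (induction w rule: spX.induct) auto

lemma sp_mg: "set X \<subseteq> {0,1} \<Longrightarrow> set A \<subseteq> {0,1} \<Longrightarrow> set B \<subseteq> {0,1} \<Longrightarrow>
  length A = c1 X \<Longrightarrow> length B = c0 X \<Longrightarrow>
  spX (mg X A B) = X \<and> sp2 (mg X A B) = A \<and> sp3 (mg X A B) = B"
proof (induction X arbitrary: A B)
  case Nil then show ?case by simp
next
  case (Cons x X)
  show ?case
  proof (cases "x = 1")
    case True
    then obtain a A' where A: "A = a # A'" using Cons.prems by (cases A) auto
    then show ?thesis using Cons.IH[of A' B] Cons.prems True by auto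
  next
    case False
    then have x0: "x = 0" using Cons.prems by auto
    then obtain b B' where B: "B = b # B'" using Cons.prems by (cases B) auto
    then show ?thesis using Cons.IH[of A B'] Cons.prems x0 by auto
  qed
qed

lemma mg_len: "length (mg X A B) = 2 * length X"
  by (induction X arbitrary: A B) auto

lemma mg_set: "set (mg X A B) \<subseteq> {0,1}"
  by (induction X arbitrary: A B) auto

lemma sp_props: "set w \<subseteq> {0,1} \<Longrightarrow> even (length w) \<Longrightarrow>
  set (spX w) \<subseteq> {0,1} \<and> set (sp2 w) \<subseteq> {0,1} \<and> set (sp3 w) \<subseteq> {0,1} \<and>
  length (spX w) = length w div 2 \<and> length (sp2 w) = c1 (spX w) \<and> length (sp3 w) = c0 (spX w) \<and>
  c0 w + c1 (sp3 w) = length (spX w) + c1 (sp2 w) \<and> c0 w + c1 w = length w"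
  by (induction w rule: spX.induct) auto

lemma o0_aux: "length w = 2 * n \<Longrightarrow> card {j. j < n \<and> w ! (2*j) = 0} = c1 (spX w)"
proof (induction n arbitrary: w)
  case 0 then show ?case by simp
next
  case (Suc n)
  then obtain a b u where w: "w = a # b # u" and lu: "length u = 2 * n"
    by (cases w; cases "tl w") auto
  have "card {j. j < Suc n \<and> w ! (2*j) = 0} = (if 0 < Suc n \<and> w ! (2*0) = 0 then 1 else 0) + card {j. j < n \<and> u ! (2*j) = 0}"
    by (rule card_shift[where P="\<lambda>j. j < Suc n \<and> w ! (2*j) = 0"]) (auto simp: w)
  then show ?case using Suc.IH[OF lu] w by simp
qed

lemma o00_aux: "length w = 2 * n \<Longrightarrow> card {j. j < n \<and> w ! (2*j) = 0 \<and> w ! (2*j+1) = 0} = c1 (sp2 w)"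
proof (induction n arbitrary: w)
  case 0 then show ?case by simp
next
  case (Suc n)
  then obtain a b u where w: "w = a # b # u" and lu: "length u = 2 * n"
    by (cases w; cases "tl w") auto
  have "card {j. j < Suc n \<and> w ! (2*j) = 0 \<and> w ! (2*j+1) = 0} = (if 0 < Suc n \<and> w ! (2*0) = 0 \<and> w ! (2*0+1) = 0 then 1 else 0) + card {j. j < n \<and> u ! (2*j) = 0 \<and> u ! (2*j+1) = 0}"
    by (rule card_shift[where P="\<lambda>j. j < Suc n \<and> w ! (2*j) = 0 \<and> w ! (2*j+1) = 0"]) (auto simp: w)
  then show ?case using Suc.IH[OF lu] w by simp
qed

lemma card_1n: "card {i \<in> {1..n}. P i} = card {j. j < n \<and> P (Suc j)}"
proof -
  have "{i \<in> {1..n}. P i} = Suc ` {j. j < n \<and> P (Suc j)}"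
    by (auto simp: image_iff) (metis Suc_le_eq Suc_pred' less_eq_Suc_le)
  then show ?thesis by (simp add: card_image)
qed

lemma o0_eq: "length w = 2 * n \<Longrightarrow> o0 n w = c1 (spX w)"
  unfolding o0_def card_1n using o0_aux by simp

lemma o00_eq: "length w = 2 * n \<Longrightarrow> o00 n w = c1 (sp2 w)"
  unfolding o00_def card_1n using o00_aux by simp


lemma len01: "set v \<subseteq> {0,1} \<Longrightarrow> c0 v + c1 v = length v"
  by (induction v) auto

definition phi :: "nat list \<Rightarrow> nat list" where
  "phi w = dec (spX w) (dec (sp2 w) (sp3 w))"

definition psi :: "nat list \<Rightarrow> nat list" where
  "psi v = mg (encX False v) (encX False (encY v)) (encY (encY v))"

lemma phi_props:
  assumes "w \<in> G n"
  shows "phi w \<in> G n \<and> psi (phi w) = w \<and> o00 n w = occ001 (phi w) \<and> o0 n w = occ01 (phi w)"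
proof -
  have w: "set w \<subseteq> {0,1}" "length w = 2 * n" "c0 w = n" "c1 w = n" using assms by (auto simp: G_def)
  define X where "X = spX w"
  define A where "A = sp2 w"
  define B where "B = sp3 w"
  define Y where "Y = dec A B"
  define v where "v = dec X Y"
  have ve: "phi w = v" unfolding phi_def v_def Y_def X_def A_def B_def ..
  have sp: "set X \<subseteq> {0,1}" "set A \<subseteq> {0,1}" "set B \<subseteq> {0,1}" "length X = n"
    "length A = c1 X" "length B = c0 X" "c0 w + c1 B = length X + c1 A"
    using sp_props[OF w(1)] w(2) unfolding X_def A_def B_def by auto
  have cAB: "c1 A = c1 B" using sp w by simp
  have Y: "set Y \<subseteq> {0,1}" "c1 Y = c1 X" "c0 Y = length B" unfolding Y_def
    using dec_set dec_c1 dec_c0 sp by auto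
  have lY: "length Y = n" using len01[OF Y(1)] len01[OF sp(1)] Y sp by simp
  have v: "set v \<subseteq> {0,1}" "c1 v = n" "c0 v = n" unfolding v_def
    using dec_set dec_c1 dec_c0 sp lY by auto
  have lv: "length v = 2 * n" using len01[OF v(1)] v by simp
  have vG: "v \<in> G n" using v lv by (simp add: G_def)
  have eY: "encY v = Y" unfolding v_def by (rule encY_dec) (use sp Y in auto)
  have eX: "encX False v = X" unfolding v_def by (rule encX_dec) (use sp Y in auto)
  have eB: "encY Y = B" unfolding Y_def by (rule encY_dec) (use sp cAB in auto)
  have eA: "encX False Y = A" unfolding Y_def by (rule encX_dec) (use sp cAB in auto)
  have inv: "psi v = w" unfolding psi_def eY eX eB eA X_def A_def B_def
    using mg_sp w by simp
  have s1: "occ01 v = o0 n w"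
    using occ01_c01[of v] encY_c1[of v] eY Y(2) o0_eq[OF w(2)] X_def by simp
  have s2: "occ001 v = o00 n w"
    using occ001_c001[of v] c001_encY[OF v(1)] eY encY_c1[of Y] eB cAB o00_eq[OF w(2)] A_def by simp
  show ?thesis using ve vG inv s1 s2 by simp
qed

lemma psi_props:
  assumes "v \<in> G n"
  shows "psi v \<in> G n \<and> phi (psi v) = v"
proof -
  have v: "set v \<subseteq> {0,1}" "length v = 2 * n" "c0 v = n" "c1 v = n" using assms by (auto simp: G_def)
  define X where "X = encX False v"
  define Y where "Y = encY v"
  define A where "A = encX False Y"
  define B where "B = encY Y"
  define w where "w = mg X A B"
  have we: "psi v = w" unfolding psi_def w_def X_def Y_def A_def B_def ..
  have XY: "set X \<subseteq> {0,1}" "set Y \<subseteq> {0,1}" "length X = n" "length Y = n" "c1 X = c1 Y"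
    unfolding X_def Y_def using encX_set encY_set encX_len encY_len v encX_c1[OF v(1)] encY_c1 by auto
  have AB: "set A \<subseteq> {0,1}" "set B \<subseteq> {0,1}" "length A = c1 X" "length B = c0 X" "c1 A = c1 B"
    unfolding A_def B_def using encX_set encY_set encX_len encY_len XY encX_c1[OF XY(2)] encY_c1
      len01[OF XY(1)] len01[OF XY(2)] by auto
  have spw: "spX w = X" "sp2 w = A" "sp3 w = B" using sp_mg[OF XY(1) AB(1,2,3,4)] w_def by auto
  have wl: "set w \<subseteq> {0,1}" "length w = 2 * n" using mg_len mg_set XY w_def by auto
  have sp: "c0 w + c1 (sp3 w) = length (spX w) + c1 (sp2 w)" using sp_props[OF wl(1)] wl(2) by auto
  have c0w: "c0 w = n" using sp spw AB XY by simp
  have c1w: "c1 w = n" using len01[OF wl(1)] c0w wl(2) by simp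
  have wG: "w \<in> G n" using wl c0w c1w by (simp add: G_def)
  have "phi w = v" unfolding phi_def spw A_def B_def X_def Y_def
    using dec_enc[OF encY_set] dec_enc[OF v(1)] by simp
  then show ?thesis using we wG by simp
qed

theorem theorem3p4:
  fixes n :: nat
  shows "\<exists>\<phi>. bij_betw \<phi> (G n) (G n) \<and>
           (\<forall>w \<in> G n. o00 n w = occ001 (\<phi> w) \<and> o0 n w = occ01 (\<phi> w))"
proof (intro exI conjI)
  show "bij_betw phi (G n) (G n)"
    by (rule bij_betw_byWitness[where f'=psi]) (use phi_props psi_props in auto)
  show "\<forall>w \<in> G n. o00 n w = occ001 (phi w) \<and> o0 n w = occ01 (phi w)"
    using phi_props by blast
qed

end
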